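(* Let $d\ge 1$ be an integer and, for $t\ge 0$, let $N_t$ be the number of vertices of the $t$-iterated line digraph $L^t(CK(d,4))$. Then $$N_t=\alpha\left(\frac{d-1+\sqrt{d^2-2d+5}}{2}\right)^t+\beta\left(\frac{d-1-\sqrt{d^2-2d+5}}{2}\right)^t,$$ where $\alpha=\frac12 d(d+1)\left(d^2-d+1+\frac{d^3-2d^2+4d-1}{\sqrt{d^2-2d+5}}\right)$ and $\beta=\frac12 d(d+1)\left(d^2-d+1-\frac{d^3-2d^2+4d-1}{\sqrt{d^2-2d+5}}\right)$. Moreover, if $d=2$, then $N_0=18$, $N_1=30$ and $N_t=N_{t-1}+N_{t-2}$ for all $t\ge 2$.
   Context: Let $\Sigma=\{0,1,\dots,d\}$. The cyclic Kautz digraph $CK(d,\ell)$ has as vertices all sequences $a_1\ldots a_\ell\in\Sigma^\ell$ with $a_i\neq a_{i+1}$ for $1\le i\le \ell-1$ and $a_1\neq a_\ell$, with an arc from $a_1\ldots a_\ell$ to $b_1\ldots b_\ell$ iff both are vertices and $b_i=a_{i+1}$ for $1\le i\le\ell-1$. The line digraph $L(G)$ of a digraph $G$ has as vertices the arcs of $G$, with an arc from $(u,v)$ to $(v',w)$ iff $v'=v$. $L^0(G)=G$ and $L^t(G)=L(L^{t-1}(G))$. *)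

theory Defs
  imports Complex_Main
begin

text \<open>Vertices of iterated line digraphs: a base vertex, or an arc (u,v) of the previous digraph.
  This uniform type allows iterating the line digraph construction.\<close>
datatype 'a vert = Base 'a | Arc "'a vert" "'a vert"

type_synonym 'a digraph = "'a set \<times> ('a \<times> 'a) set"

definition line_digraph :: "'a vert digraph \<Rightarrow> 'a vert digraph" where
  "line_digraph G =
     ({Arc u v | u v. (u, v) \<in> snd G},
      {(Arc u v, Arc v' w) | u v v' w. (u, v) \<in> snd G \<and> (v', w) \<in> snd G \<and> v' = v})"

definition ck_vertices :: "nat \<Rightarrow> nat \<Rightarrow> nat list set" where
  "ck_vertices d l = {xs. length xs = l \<and> set xs \<subseteq> {0..d}
       \<and> (\<forall>i. Suc i < l \<longrightarrow> xs ! i \<noteq> xs ! Suc i) \<and> xs ! 0 \<noteq> xs ! (l - 1)}"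

definition cyclic_kautz :: "nat \<Rightarrow> nat \<Rightarrow> nat list vert digraph" where
  "cyclic_kautz d l =
     (Base ` ck_vertices d l,
      {(Base a, Base b) | a b. a \<in> ck_vertices d l \<and> b \<in> ck_vertices d l
          \<and> (\<forall>i. Suc i < l \<longrightarrow> b ! i = a ! Suc i)})"

definition N_ck4 :: "nat \<Rightarrow> nat \<Rightarrow> nat" where
  "N_ck4 d t = card (fst ((line_digraph ^^ t) (cyclic_kautz d 4)))"

end

theory Submission imports Defs begin

definition good :: "nat \<Rightarrow> 'a vert digraph \<Rightarrow> ('a vert \<Rightarrow> bool) \<Rightarrow> nat \<Rightarrow> nat \<Rightarrow> bool" where
"good d G \<tau> a b \<longleftrightarrow> finite (fst G) \<and> snd G \<subseteq> fst G \<times> fst G \<and> card {v\<in>fst G. \<tau> v} = a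
   \<and> card {v\<in>fst G. \<not> \<tau> v} = b \<and> (\<forall>v\<in>fst G. card {w. (v,w)\<in>snd G \<and> \<tau> w} = 1
   \<and> card {w. (v,w)\<in>snd G \<and> \<not> \<tau> w} = (if \<tau> v then d-1 else d-2))"

lemma card_pairs:
  assumes "finite V" "E \<subseteq> V \<times> V"
  shows "card {p\<in>E. P (snd p)} = (\<Sum>u\<in>V. card {w. (u,w)\<in>E \<and> P w})"
proof -
  have "{p\<in>E. P (snd p)} = Sigma V (\<lambda>u. {w. (u,w)\<in>E \<and> P w})" using assms(2) by auto
  moreover have "\<forall>u\<in>V. finite {w. (u,w)\<in>E \<and> P w}" using assms
    by (auto intro: finite_subset[of _ V])
  ultimately show ?thesis using assms(1) by (simp add: card_SigmaI)
qed

lemma card_split: "finite A \<Longrightarrow> card A = card {x\<in>A. P x} + card {x\<in>A. \<not> P x}"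
proof -
  assume f: "finite A"
  have "A = {x\<in>A. P x} \<union> {x\<in>A. \<not> P x}" by auto
  then have "card A = card ({x\<in>A. P x} \<union> {x\<in>A. \<not> P x})" by simp
  also have "\<dots> = card {x\<in>A. P x} + card {x\<in>A. \<not> P x}" using f by (intro card_Un_disjoint) auto
  finally show ?thesis .
qed

lemma good_step:
  assumes g: "good d G \<tau> a b"
  shows "good d (line_digraph G) (\<lambda>x. case x of Arc u v \<Rightarrow> \<tau> v | Base _ \<Rightarrow> False) (a+b) ((d-1)*a+(d-2)*b)"
proof -
  let ?V = "fst G" let ?E = "snd G"
  let ?t = "\<lambda>x. case x of Arc u v \<Rightarrow> \<tau> v | Base _ \<Rightarrow> False"
  from g have fin: "finite ?V" and sub: "?E \<subseteq> ?V \<times> ?V" and ca: "card {v\<in>?V. \<tau> v} = a"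
    and cb: "card {v\<in>?V. \<not> \<tau> v} = b"
    and out: "\<And>v. v \<in> ?V \<Longrightarrow> card {w. (v,w)\<in>?E \<and> \<tau> w} = 1 \<and> card {w. (v,w)\<in>?E \<and> \<not> \<tau> w} = (if \<tau> v then d-1 else d-2)"
    unfolding good_def by auto
  have finE: "finite ?E" using fin sub by (meson finite_SigmaI finite_subset)
  have V': "fst (line_digraph G) = (\<lambda>(u,v). Arc u v) ` ?E" unfolding line_digraph_def by auto
  have E': "snd (line_digraph G) = {(Arc u v, Arc v w) | u v w. (u,v)\<in>?E \<and> (v,w)\<in>?E}"
    unfolding line_digraph_def by auto
  have inj: "inj_on (\<lambda>(u,v). Arc u v) X" for X by (auto simp: inj_on_def)
  have cnt: "card {x\<in>fst (line_digraph G). P (?t x)} = card {p\<in>?E. P (\<tau> (snd p))}" for P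
  proof -
    have "{x\<in>fst (line_digraph G). P (?t x)} = (\<lambda>(u,v). Arc u v) ` {p\<in>?E. P (\<tau> (snd p))}"
      unfolding V' by auto
    then show ?thesis by (simp add: card_image[OF inj])
  qed
  have cardV: "card ?V = a + b" using card_split[OF fin, of \<tau>] ca cb by simp
  have A: "card {x\<in>fst (line_digraph G). ?t x} = a+b"
  proof -
    have "card {x\<in>fst (line_digraph G). ?t x} = (\<Sum>u\<in>?V. card {w. (u,w)\<in>?E \<and> \<tau> w})"
      using cnt[of "\<lambda>x. x"] card_pairs[OF fin sub, of \<tau>] by simp
    also have "\<dots> = (\<Sum>u\<in>?V. 1)" using out by (intro sum.cong) auto
    finally show ?thesis using cardV by simp
  qed
  have B: "card {x\<in>fst (line_digraph G). \<not> ?t x} = (d-1)*a+(d-2)*b"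
  proof -
    have "card {x\<in>fst (line_digraph G). \<not> ?t x} = (\<Sum>u\<in>?V. card {w. (u,w)\<in>?E \<and> \<not> \<tau> w})"
      using cnt[of "Not"] card_pairs[OF fin sub, of "\<lambda>x. \<not> \<tau> x"] by simp
    also have "\<dots> = (\<Sum>u\<in>?V. if \<tau> u then d-1 else d-2)" using out by (intro sum.cong) auto
    also have "\<dots> = (\<Sum>u\<in>{v\<in>?V. \<tau> v}. d-1) + (\<Sum>u\<in>{v\<in>?V. \<not> \<tau> v}. d-2)"
      using fin by (simp add: sum.If_cases Int_def)
    finally show ?thesis using ca cb by (simp add: mult.commute)
  qed
  have sub': "snd (line_digraph G) \<subseteq> fst (line_digraph G) \<times> fst (line_digraph G)"
    unfolding V' E' by auto
  have out': "card {y. (x,y)\<in>snd (line_digraph G) \<and> P (?t y)} = card {w. (v,w)\<in>?E \<and> P (\<tau> w)}"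
    if "(u,v) \<in> ?E" "x = Arc u v" for x u v P
  proof -
    have "{y. (x,y)\<in>snd (line_digraph G) \<and> P (?t y)} = Arc v ` {w. (v,w)\<in>?E \<and> P (\<tau> w)}"
      unfolding E' using that by auto
    then show ?thesis by (simp add: card_image inj_on_def)
  qed
  have O: "\<forall>x\<in>fst (line_digraph G). card {y. (x,y)\<in>snd (line_digraph G) \<and> ?t y} = 1
     \<and> card {y. (x,y)\<in>snd (line_digraph G) \<and> \<not> ?t y} = (if ?t x then d-1 else d-2)"
  proof
    fix x assume "x \<in> fst (line_digraph G)"
    then obtain u v where uv: "(u,v) \<in> ?E" "x = Arc u v" unfolding V' by auto
    then have vV: "v \<in> ?V" using sub by auto
    show "card {y. (x,y)\<in>snd (line_digraph G) \<and> ?t y} = 1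
     \<and> card {y. (x,y)\<in>snd (line_digraph G) \<and> \<not> ?t y} = (if ?t x then d-1 else d-2)"
      using out'[OF uv, of "\<lambda>x. x"] out'[OF uv, of Not] out[OF vV] uv(2) by simp
  qed
  show ?thesis unfolding good_def using A B O sub' finE V' by simp
qed


fun ab :: "nat \<Rightarrow> nat \<Rightarrow> nat \<Rightarrow> nat \<Rightarrow> nat \<times> nat" where
"ab d a b 0 = (a,b)"
| "ab d a b (Suc t) = (case ab d a b t of (x,y) \<Rightarrow> (x+y, (d-1)*x+(d-2)*y))"

lemma good_iter: "good d G \<tau> a b \<Longrightarrow>
   \<exists>\<tau>'. good d ((line_digraph^^t) G) \<tau>' (fst (ab d a b t)) (snd (ab d a b t))"
proof (induction t)
  case 0 then show ?case by auto
next
  case (Suc t)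
  then obtain \<tau>' where "good d ((line_digraph^^t) G) \<tau>' (fst (ab d a b t)) (snd (ab d a b t))" by blast
  from good_step[OF this] show ?case by (auto split: prod.splits)
qed

lemma good_card: "good d G \<tau> a b \<Longrightarrow> card (fst G) = a + b"
  unfolding good_def using card_split[of "fst G" \<tau>] by auto

lemma ck4: "xs \<in> ck_vertices d 4 \<longleftrightarrow> (\<exists>a b c e. xs = [a,b,c,e] \<and> a \<le> d \<and> b \<le> d \<and> c \<le> d \<and> e \<le> d
    \<and> a\<noteq>b \<and> b\<noteq>c \<and> c\<noteq>e \<and> a\<noteq>e)"
proof
  assume h: "xs \<in> ck_vertices d 4"
  then have len: "length xs = 4" and st: "set xs \<subseteq> {0..d}"
    and H: "\<forall>i. Suc i < 4 \<longrightarrow> xs ! i \<noteq> xs ! Suc i" and l: "xs ! 0 \<noteq> xs ! 3"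
    unfolding ck_vertices_def by auto
  from len obtain a b c e where xs: "xs = [a,b,c,e]" by (auto simp: length_Suc_conv numeral_eq_Suc)
  have "a \<noteq> b" "b \<noteq> c" "c \<noteq> e" using H[rule_format, of 0] H[rule_format, of "Suc 0"]
     H[rule_format, of "Suc (Suc 0)"] xs by auto
  then show "\<exists>a b c e. xs = [a,b,c,e] \<and> a \<le> d \<and> b \<le> d \<and> c \<le> d \<and> e \<le> d
    \<and> a\<noteq>b \<and> b\<noteq>c \<and> c\<noteq>e \<and> a\<noteq>e" using xs st l by auto
next
  assume "\<exists>a b c e. xs = [a,b,c,e] \<and> a \<le> d \<and> b \<le> d \<and> c \<le> d \<and> e \<le> d
    \<and> a\<noteq>b \<and> b\<noteq>c \<and> c\<noteq>e \<and> a\<noteq>e"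
  then obtain a b c e where xs: "xs = [a,b,c,e]" and c: "a \<le> d" "b \<le> d" "c \<le> d" "e \<le> d"
    "a\<noteq>b" "b\<noteq>c" "c\<noteq>e" "a\<noteq>e" by blast
  have "\<forall>i. Suc i < 4 \<longrightarrow> xs ! i \<noteq> xs ! Suc i"
  proof (intro allI impI)
    fix i assume "Suc i < 4"
    then have "i = 0 \<or> i = 1 \<or> i = 2" by arith
    then show "xs ! i \<noteq> xs ! Suc i" using xs c by auto
  qed
  then show "xs \<in> ck_vertices d 4" unfolding ck_vertices_def using xs c by auto
qed

lemma ck_arc:
  assumes "[a,b,c,e] \<in> ck_vertices d 4"
  shows "(Base [a,b,c,e], w) \<in> snd (cyclic_kautz d 4) \<longleftrightarrow> (\<exists>x. w = Base [b,c,e,x] \<and> x \<le> d \<and> x \<noteq> e \<and> x \<noteq> b)"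
proof
  assume "(Base [a,b,c,e], w) \<in> snd (cyclic_kautz d 4)"
  then obtain ys where w: "w = Base ys" and ys: "ys \<in> ck_vertices d 4"
    and H: "\<forall>i. Suc i < 4 \<longrightarrow> ys ! i = [a,b,c,e] ! Suc i"
    unfolding cyclic_kautz_def by auto
  from ys obtain p q r s where yy: "ys = [p,q,r,s]" "s \<le> d" "s \<noteq> r" "s \<noteq> p" unfolding ck4 by blast
  have "p = b" "q = c" "r = e" using H[rule_format, of 0] H[rule_format, of 1]
     H[rule_format, of 2] yy by auto
  then show "\<exists>x. w = Base [b,c,e,x] \<and> x \<le> d \<and> x \<noteq> e \<and> x \<noteq> b" using w yy by auto
next
  assume "\<exists>x. w = Base [b,c,e,x] \<and> x \<le> d \<and> x \<noteq> e \<and> x \<noteq> b"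
  then obtain x where x: "w = Base [b,c,e,x]" "x \<le> d" "x \<noteq> e" "x \<noteq> b" by blast
  have "[b,c,e,x] \<in> ck_vertices d 4" using assms x unfolding ck4 by auto
  moreover have "\<forall>i. Suc i < 4 \<longrightarrow> [b,c,e,x] ! i = [a,b,c,e] ! Suc i"
  proof (intro allI impI)
    fix i :: nat assume "Suc i < 4"
    then have "i = 0 \<or> i = 1 \<or> i = 2" by arith
    then show "[b,c,e,x] ! i = [a,b,c,e] ! Suc i" by auto
  qed
  ultimately show "(Base [a,b,c,e], w) \<in> snd (cyclic_kautz d 4)"
    unfolding cyclic_kautz_def using assms x by auto
qed


definition tau0 :: "nat list vert \<Rightarrow> bool" where
  "tau0 x = (case x of Base xs \<Rightarrow> xs!1 = xs!3 | Arc _ _ \<Rightarrow> False)"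

lemma card_rem:
  assumes "b \<le> d" "c \<le> d" "e \<le> d"
  shows "card ({0..d} - {b,c,e}) = d + 1 - card {b,c,e}"
  using assms by (subst card_Diff_subset) auto

lemma card_rem1: "b \<le> (d::nat) \<Longrightarrow> card ({0..d} - {b}) = d"
  by (simp add: card_Diff_singleton)

lemma card_rem2: "b \<le> (d::nat) \<Longrightarrow> e \<le> d \<Longrightarrow> b \<noteq> e \<Longrightarrow> card ({0..d} - {b,e}) = d - 1"
  by (subst card_Diff_subset) auto

lemma ck_good:
  assumes d: "d \<ge> 1"
  shows "good d (cyclic_kautz d 4) tau0 ((d+1)*d*d) ((d+1)*d*(d-1)*(d-1))"
proof -
  let ?V = "fst (cyclic_kautz d 4)" let ?E = "snd (cyclic_kautz d 4)"
  have V: "?V = Base ` ck_vertices d 4" unfolding cyclic_kautz_def by simp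
  have "ck_vertices d 4 \<subseteq> (\<lambda>(a,b,c,e). [a,b,c,e]) ` ({0..d}\<times>{0..d}\<times>{0..d}\<times>{0..d})"
  proof
    fix xs assume "xs \<in> ck_vertices d 4"
    then obtain a b c e where "xs = [a,b,c,e]" "a \<le> d" "b \<le> d" "c \<le> d" "e \<le> d" unfolding ck4 by blast
    then show "xs \<in> (\<lambda>(a,b,c,e). [a,b,c,e]) ` ({0..d}\<times>{0..d}\<times>{0..d}\<times>{0..d})"
      by (intro image_eqI[where x="(a,b,c,e)"]) auto
  qed
  then have fin: "finite ?V" unfolding V by (meson finite_SigmaI finite_atLeastAtMost finite_imageI finite_subset)
  have sub: "?E \<subseteq> ?V \<times> ?V" unfolding cyclic_kautz_def by auto
  have SA: "{v\<in>?V. tau0 v} = Base ` ((\<lambda>(b,a,c). [a,b,c,b]) ` (SIGMA b:{0..d}. ({0..d}-{b}) \<times> ({0..d}-{b})))"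
  proof
    show "{v\<in>?V. tau0 v} \<subseteq> Base ` ((\<lambda>(b,a,c). [a,b,c,b]) ` (SIGMA b:{0..d}. ({0..d}-{b}) \<times> ({0..d}-{b})))"
    proof
      fix v assume "v \<in> {v\<in>?V. tau0 v}"
      then obtain xs where v: "v = Base xs" "xs \<in> ck_vertices d 4" "xs!1 = xs!3" unfolding V tau0_def by auto
      then obtain a b c e where "xs = [a,b,c,e]" "a \<le> d" "b \<le> d" "c \<le> d" "e \<le> d"
        "a\<noteq>b" "b\<noteq>c" "c\<noteq>e" "a\<noteq>e" unfolding ck4 by blast
      then show "v \<in> Base ` ((\<lambda>(b,a,c). [a,b,c,b]) ` (SIGMA b:{0..d}. ({0..d}-{b}) \<times> ({0..d}-{b})))"
        using v by (intro image_eqI[where x="xs"] image_eqI[where x="(b,a,c)"]) auto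
    qed
    show "Base ` ((\<lambda>(b,a,c). [a,b,c,b]) ` (SIGMA b:{0..d}. ({0..d}-{b}) \<times> ({0..d}-{b}))) \<subseteq> {v\<in>?V. tau0 v}"
      unfolding V tau0_def by (auto simp: ck4)
  qed
  have cA: "card {v\<in>?V. tau0 v} = (d+1)*d*d"
  proof -
    have "card {v\<in>?V. tau0 v} = card (SIGMA b:{0..d}. ({0..d}-{b}) \<times> ({0..d}-{b}))"
      unfolding SA
      by (subst card_image, simp add: inj_on_def, subst card_image) (auto simp: inj_on_def)
    also have "\<dots> = (\<Sum>b\<in>{0..d}. d*d)"
      by (subst card_SigmaI) (auto simp: card_cartesian_product card_rem1)
    finally show ?thesis by (simp add: algebra_simps)
  qed
  have SB: "{v\<in>?V. \<not> tau0 v} = Base ` ((\<lambda>(b,e,a,c). [a,b,c,e]) `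
      (SIGMA b:{0..d}. SIGMA e:{0..d}-{b}. ({0..d}-{b,e}) \<times> ({0..d}-{b,e})))"
  proof
    show "{v\<in>?V. \<not> tau0 v} \<subseteq> Base ` ((\<lambda>(b,e,a,c). [a,b,c,e]) `
      (SIGMA b:{0..d}. SIGMA e:{0..d}-{b}. ({0..d}-{b,e}) \<times> ({0..d}-{b,e})))"
    proof
      fix v assume "v \<in> {v\<in>?V. \<not> tau0 v}"
      then obtain xs where v: "v = Base xs" "xs \<in> ck_vertices d 4" "xs!1 \<noteq> xs!3" unfolding V tau0_def by auto
      then obtain a b c e where "xs = [a,b,c,e]" "a \<le> d" "b \<le> d" "c \<le> d" "e \<le> d"
        "a\<noteq>b" "b\<noteq>c" "c\<noteq>e" "a\<noteq>e" unfolding ck4 by blast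
      then show "v \<in> Base ` ((\<lambda>(b,e,a,c). [a,b,c,e]) `
          (SIGMA b:{0..d}. SIGMA e:{0..d}-{b}. ({0..d}-{b,e}) \<times> ({0..d}-{b,e})))"
        using v by (intro image_eqI[where x="xs"] image_eqI[where x="(b,e,a,c)"]) auto
    qed
    show "Base ` ((\<lambda>(b,e,a,c). [a,b,c,e]) `
      (SIGMA b:{0..d}. SIGMA e:{0..d}-{b}. ({0..d}-{b,e}) \<times> ({0..d}-{b,e}))) \<subseteq> {v\<in>?V. \<not> tau0 v}"
      unfolding V tau0_def by (auto simp: ck4)
  qed
  have cB: "card {v\<in>?V. \<not> tau0 v} = (d+1)*d*(d-1)*(d-1)"
  proof -
    have "card {v\<in>?V. \<not> tau0 v} = card (SIGMA b:{0..d}. SIGMA e:{0..d}-{b}. ({0..d}-{b,e}) \<times> ({0..d}-{b,e}))"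
      unfolding SB
      by (subst card_image, simp add: inj_on_def, subst card_image) (auto simp: inj_on_def)
    also have "\<dots> = (\<Sum>b\<in>{0..d}. \<Sum>e\<in>{0..d}-{b}. (d-1)*(d-1))"
      by (auto simp: card_cartesian_product card_rem2 intro!: sum.cong)
    also have "\<dots> = (\<Sum>b\<in>{0..d}. d*((d-1)*(d-1)))"
      by (intro sum.cong refl) (simp add: card_rem1)
    finally show ?thesis using d by (cases d) (simp_all add: algebra_simps)
  qed
  have out: "card {w. (v,w)\<in>?E \<and> tau0 w} = 1 \<and> card {w. (v,w)\<in>?E \<and> \<not> tau0 w} = (if tau0 v then d-1 else d-2)"
    if vV: "v \<in> ?V" for v
  proof -
    from vV obtain xs where v: "v = Base xs" "xs \<in> ck_vertices d 4" unfolding V by auto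
    then obtain a b c e where xs: "xs = [a,b,c,e]" "a \<le> d" "b \<le> d" "c \<le> d" "e \<le> d"
        "a\<noteq>b" "b\<noteq>c" "c\<noteq>e" "a\<noteq>e" unfolding ck4 by blast
    have arc: "(v, w) \<in> ?E \<longleftrightarrow> (\<exists>x. w = Base [b,c,e,x] \<and> x \<le> d \<and> x \<noteq> e \<and> x \<noteq> b)" for w
      using ck_arc[of a b c e d w] v xs by simp
    have s1: "{w. (v,w)\<in>?E \<and> tau0 w} = {Base [b,c,e,c]}"
      unfolding arc tau0_def using xs by auto
    have s2: "{w. (v,w)\<in>?E \<and> \<not> tau0 w} = (\<lambda>x. Base [b,c,e,x]) ` ({0..d} - {b,c,e})"
      unfolding arc tau0_def using xs by auto
    have c2: "card {w. (v,w)\<in>?E \<and> \<not> tau0 w} = d + 1 - card {b,c,e}"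
      unfolding s2 using xs by (subst card_image) (auto simp: inj_on_def card_rem)
    show ?thesis
    proof (cases "b = e")
      case True
      then have "{b,c,e} = {c,e}" by auto
      then have "card {b,c,e} = 2" using xs by simp
      then show ?thesis using True s1 c2 xs v by (simp add: tau0_def)
    next
      case False
      then have "card {b,c,e} = 3" using xs by simp
      then show ?thesis using False s1 c2 xs v by (simp add: tau0_def)
    qed
  qed
  show ?thesis unfolding good_def using fin sub cA cB out by blast
qed


lemma ab_rec: "d \<ge> 1 \<Longrightarrow> fst (ab d a b (Suc (Suc t))) + snd (ab d a b (Suc (Suc t)))
   = (d-1)*(fst (ab d a b (Suc t)) + snd (ab d a b (Suc t))) + (fst (ab d a b t) + snd (ab d a b t))"
proof -
  assume d: "d \<ge> 1"
  obtain x y where xy: "ab d a b t = (x,y)" by (cases "ab d a b t")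
  show ?thesis
  proof (cases "d = 1")
    case True then show ?thesis using xy by simp
  next
    case False
    then obtain k where k: "d = Suc (Suc k)" using d by (metis One_nat_def Suc_le_D le_SucE nat.exhaust le_zero_eq not_less_eq_eq)
    show ?thesis using xy k by (simp add: algebra_simps)
  qed
qed

abbreviation A0 :: "nat \<Rightarrow> nat" where "A0 d \<equiv> (d+1)*d*d"
abbreviation B0 :: "nat \<Rightarrow> nat" where "B0 d \<equiv> (d+1)*d*(d-1)*(d-1)"

lemma N_eq: "d \<ge> 1 \<Longrightarrow> N_ck4 d t = fst (ab d (A0 d) (B0 d) t) + snd (ab d (A0 d) (B0 d) t)"
  using good_iter[OF ck_good, of d t] good_card unfolding N_ck4_def by blast

lemma s0: "d \<ge> 1 \<Longrightarrow> real (N_ck4 d 0) = real d * (real d + 1) * (real d ^ 2 - real d + 1)"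
proof -
  assume d: "d \<ge> 1"
  then obtain k where k: "d = Suc k" by (cases d) auto
  show ?thesis using N_eq[OF d, of 0] unfolding k by (simp add: algebra_simps power2_eq_square)
qed

lemma s1: "d \<ge> 1 \<Longrightarrow> real (N_ck4 d 1) = real d * (real d + 1) * (real d ^ 3 - 2 * real d ^ 2 + 3 * real d - 1)"
proof -
  assume d: "d \<ge> 1"
  show ?thesis
  proof (cases "d = 1")
    case True then show ?thesis by (simp add: N_eq)
  next
    case False
    then obtain k where k: "d = Suc (Suc k)" using d by (metis One_nat_def Suc_le_D le_SucE nat.exhaust le_zero_eq not_less_eq_eq)
    show ?thesis using N_eq[OF d, of 1] unfolding k by (simp add: algebra_simps power2_eq_square power3_eq_cube)
  qed
qed


lemma closed_form:
  fixes s :: "nat \<Rightarrow> real" and x S :: real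
  assumes S2: "S^2 = x^2 - 2*x + 5" and Spos: "S > 0"
    and s0: "s 0 = x*(x+1)*(x^2-x+1)"
    and s1: "s 1 = x*(x+1)*(x^3-2*x^2+3*x-1)"
    and rec: "\<And>t. s (Suc (Suc t)) = (x-1) * s (Suc t) + s t"
  shows "s t = (1/2 * x * (x + 1) * (x ^ 2 - x + 1 + (x ^ 3 - 2 * x ^ 2 + 4 * x - 1) / S)) * ((x - 1 + S) / 2) ^ t
     + (1/2 * x * (x + 1) * (x ^ 2 - x + 1 - (x ^ 3 - 2 * x ^ 2 + 4 * x - 1) / S)) * ((x - 1 - S) / 2) ^ t"
proof -
  define r1 where "r1 = (x - 1 + S) / 2"
  define r2 where "r2 = (x - 1 - S) / 2"
  define \<alpha> where "\<alpha> = 1/2 * x * (x + 1) * (x ^ 2 - x + 1 + (x ^ 3 - 2 * x ^ 2 + 4 * x - 1) / S)"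
  define \<beta> where "\<beta> = 1/2 * x * (x + 1) * (x ^ 2 - x + 1 - (x ^ 3 - 2 * x ^ 2 + 4 * x - 1) / S)"
  have e1: "r1^2 - (x-1)*r1 - 1 = (S^2 - (x^2 - 2*x + 5))/4" unfolding r1_def
    by (simp add: field_simps power2_eq_square)
  have e2: "r2^2 - (x-1)*r2 - 1 = (S^2 - (x^2 - 2*x + 5))/4" unfolding r2_def
    by (simp add: field_simps power2_eq_square)
  have q1: "r1^2 = (x-1)*r1 + 1" using e1 S2 by simp
  have q2: "r2^2 = (x-1)*r2 + 1" using e2 S2 by simp
  have b0: "s 0 = \<alpha> * r1^0 + \<beta> * r2^0" using s0 Spos unfolding \<alpha>_def \<beta>_def by (simp add: field_simps power2_eq_square)
  have "\<alpha> * r1 + \<beta> * r2 = x*(x+1)*(x^3-2*x^2+3*x-1)" using Spos unfolding \<alpha>_def \<beta>_def r1_def r2_def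
    by (simp add: field_simps power2_eq_square power3_eq_cube)
  then have b1: "s 1 = \<alpha> * r1^1 + \<beta> * r2^1" using s1 by simp
  have "s t = \<alpha> * r1^t + \<beta> * r2^t \<and> s (Suc t) = \<alpha> * r1^Suc t + \<beta> * r2^Suc t"
  proof (induction t)
    case 0 then show ?case using b0 b1 by simp
  next
    case (Suc t)
    have "s (Suc (Suc t)) = (x-1) * (\<alpha> * r1^Suc t + \<beta> * r2^Suc t) + (\<alpha> * r1^t + \<beta> * r2^t)"
      using rec Suc by simp
    also have "\<dots> = \<alpha> * r1^t * ((x-1)*r1 + 1) + \<beta> * r2^t * ((x-1)*r2+1)" by (simp add: algebra_simps)
    also have "\<dots> = \<alpha> * r1^Suc (Suc t) + \<beta> * r2^Suc (Suc t)"
      unfolding q1[symmetric] q2[symmetric] by (simp add: power2_eq_square algebra_simps)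
    finally show ?case using Suc by simp
  qed
  then show ?thesis unfolding \<alpha>_def \<beta>_def r1_def r2_def by simp
qed

theorem proposition3:
  fixes d :: nat
  assumes "d \<ge> 1"
  shows "(\<forall>t. real (N_ck4 d t) =
            (1/2 * real d * (real d + 1) * (real d ^ 2 - real d + 1
               + (real d ^ 3 - 2 * real d ^ 2 + 4 * real d - 1) / sqrt (real d ^ 2 - 2 * real d + 5)))
              * ((real d - 1 + sqrt (real d ^ 2 - 2 * real d + 5)) / 2) ^ t
          + (1/2 * real d * (real d + 1) * (real d ^ 2 - real d + 1
               - (real d ^ 3 - 2 * real d ^ 2 + 4 * real d - 1) / sqrt (real d ^ 2 - 2 * real d + 5)))
              * ((real d - 1 - sqrt (real d ^ 2 - 2 * real d + 5)) / 2) ^ t)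
       \<and> (d = 2 \<longrightarrow> N_ck4 d 0 = 18 \<and> N_ck4 d 1 = 30
            \<and> (\<forall>t\<ge>2. N_ck4 d t = N_ck4 d (t - 1) + N_ck4 d (t - 2)))"
proof -
  have d: "d \<ge> 1" by fact
  let ?x = "real d"
  have D: "?x ^ 2 - 2 * ?x + 5 = (?x - 1)^2 + 4" by (simp add: power2_eq_square algebra_simps)
  have Dpos: "?x ^ 2 - 2 * ?x + 5 > 0" unfolding D by (simp add: add_nonneg_pos)
  have S2: "(sqrt (?x ^ 2 - 2 * ?x + 5))^2 = ?x ^ 2 - 2 * ?x + 5" using Dpos by simp
  have Spos: "sqrt (?x ^ 2 - 2 * ?x + 5) > 0" using Dpos by simp
  have recN: "real (N_ck4 d (Suc (Suc t))) = (?x - 1) * real (N_ck4 d (Suc t)) + real (N_ck4 d t)" for t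
  proof -
    have "N_ck4 d (Suc (Suc t)) = (d-1) * N_ck4 d (Suc t) + N_ck4 d t"
      using ab_rec[OF d] N_eq[OF d] by metis
    then show ?thesis using d by (simp add: of_nat_diff)
  qed
  have P2: "d = 2 \<longrightarrow> N_ck4 d 0 = 18 \<and> N_ck4 d 1 = 30
            \<and> (\<forall>t\<ge>2. N_ck4 d t = N_ck4 d (t - 1) + N_ck4 d (t - 2))"
  proof
    assume d2: "d = 2"
    have "N_ck4 d 0 = 18" using N_eq[OF d, of 0] d2 by simp
    moreover have "N_ck4 d 1 = 30" using N_eq[OF d, of 1] d2 by simp
    moreover have "\<forall>t\<ge>2. N_ck4 d t = N_ck4 d (t - 1) + N_ck4 d (t - 2)"
    proof (intro allI impI)
      fix t :: nat assume "t \<ge> 2"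
      then obtain m where m: "t = Suc (Suc m)" by (metis add_2_eq_Suc le_Suc_ex)
      have "N_ck4 d (Suc (Suc m)) = (d-1) * N_ck4 d (Suc m) + N_ck4 d m"
        using ab_rec[OF d] N_eq[OF d] by metis
      then show "N_ck4 d t = N_ck4 d (t - 1) + N_ck4 d (t - 2)" using m d2 by simp
    qed
    ultimately show "N_ck4 d 0 = 18 \<and> N_ck4 d 1 = 30
            \<and> (\<forall>t\<ge>2. N_ck4 d t = N_ck4 d (t - 1) + N_ck4 d (t - 2))" by blast
  qed
  show ?thesis using P2 closed_form[OF S2 Spos s0[OF d] s1[OF d] recN] by blast
qed

end
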